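(* Let $q$ be a nonzero complex number with $q^4\ne1$. Let $\zeta,\kappa,\zeta',\kappa'$ be nonzero complex numbers with $\zeta\neq\pm1$, $\kappa^4\neq 1$, $\zeta'\ne\pm1$, $(\kappa')^4\neq1$. Let $x,y$ and $x',y'$ be the standard bases of $V(\zeta,\kappa)$ and $V(\zeta',\kappa')$. If \[\phi: V(\zeta,\kappa)\otimes V(\zeta',\kappa')\to V(\zeta',\kappa')\otimes V(\zeta,\kappa)\] is a module isomorphism, then there are constants $a_1,a_2,b_1,b_2,c_1,c_2$ with \[\phi(x\otimes x')=a_2\,x'\otimes x,\quad \phi(x\otimes y')=c_2\,x'\otimes y+b_2\,y'\otimes x,\] \[\phi(y\otimes x')=b_1\,x'\otimes y+c_1\,y'\otimes x,\quad \phi(y\otimes y')=a_1\,y'\otimes y. \tag{$*$}\] Furthermore, a linear map $\phi$ of the form $( * )$ is a module homomorphism if and only if \[ \begin{aligned} &[\zeta]c_2+[\zeta']\zeta^{-1}b_2=[\zeta']a_2, && [\zeta]b_1+\zeta^{-1}[\zeta']c_1=[\zeta](\zeta')^{-1}a_2,\\ &[\zeta']\zeta^{-1}a_1=(\zeta')^{-1}[\zeta]c_2-[\zeta']b_1, && -[\zeta]a_1=(\zeta')^{-1}[\zeta]b_2-[\zeta']c_1,\\ &a_2=c_1+\zeta b_2, && \zeta'a_2=b_1+\zeta c_2,\\ &c_2-\zeta'b_2=a_1, && b_1-c_1\zeta'=-a_1\zeta. \end{aligned} \]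
   Context: $[\zeta]=\frac{\zeta-\zeta^{-1}}{q-q^{-1}}$. $U_q(\mathfrak{gl}(1|1))$ is the associative superalgebra generated by odd $E,F$ and even invertible commuting $W^{\pm1},K^{\pm1}$ with relations $KEK^{-1}=q^2E$, $KFK^{-1}=q^{-2}F$, $W$ central, $EF+FE=\frac{W-W^{-1}}{q-q^{-1}}$, $E^2=F^2=0$. It is a Hopf superalgebra with comultiplication $\Delta(W)=W\otimes W$, $\Delta(K)=K\otimes K$, $\Delta(E)=E\otimes W^{-1}+1\otimes E$, $\Delta(F)=F\otimes 1+W\otimes F$; tensor products of modules are formed via $\Delta$ with the sign rule $(a\otimes b)(v\otimes w)=(-1)^{|b||v|}(av\otimes bw)$ for homogeneous elements. For $\zeta,\kappa\in\mathbb{C}^\times$, $V(\zeta,\kappa)$ is the module with basis $x$ (even), $y$ (odd) and action $Ex=0$, $Fx=y$, $Wx=\zeta x$, $Kx=\kappa x$, $Fy=0$, $Ey=[\zeta]x$, $Wy=\zeta y$, $Ky=q^{-2}\kappa y$; similarly $V(\zeta',\kappa')$ has basis $x',y'$. A module homomorphism is a linear map commuting with the action of all generators. *)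

theory Defs
  imports "HOL-Analysis.Analysis"
begin

definition qbr :: "complex \<Rightarrow> complex \<Rightarrow> complex" where
  "qbr q z = (z - inverse z) / (q - inverse q)"

text \<open>Generators of U_q(gl(1|1)) (W^{-1}, K^{-1} are determined by W, K).\<close>
datatype gen = GE | GF | GW | GK

text \<open>The module V(zeta,kappa): basis indexed by bool, False = x (even), True = y (odd).
  A matrix M :: complex^bool^bool has entry M $ i $ j = coefficient of basis i in M(basis j).\<close>
definition actV :: "complex \<Rightarrow> complex \<Rightarrow> complex \<Rightarrow> gen \<Rightarrow> complex^bool^bool" where
  "actV q z k g = (case g of
     GE \<Rightarrow> (\<chi> i j. if i = False \<and> j = True then qbr q z else 0)
   | GF \<Rightarrow> (\<chi> i j. if i = True \<and> j = False then 1 else 0)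
   | GW \<Rightarrow> (\<chi> i j. if i = j then z else 0)
   | GK \<Rightarrow> (\<chi> i j. if i = j then (if i then inverse (q^2) * k else k) else 0))"

definition WinvV :: "complex \<Rightarrow> complex^bool^bool" where
  "WinvV z = (\<chi> i j. if i = j then inverse z else 0)"

text \<open>Super tensor product of operators: (A \<otimes> B)(e_k \<otimes> e_l) = (-1)^{|B||e_k|} A e_k \<otimes> B e_l,
  where pB is the parity of B (True = odd) and the parity of basis vector e_k is k.\<close>
definition tensM :: "bool \<Rightarrow> complex^bool^bool \<Rightarrow> complex^bool^bool \<Rightarrow> complex^(bool\<times>bool)^(bool\<times>bool)" where
  "tensM pB A B = (\<chi> r s. (if pB \<and> fst s then -1 else 1) * (A $ fst r $ fst s) * (B $ snd r $ snd s))"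

text \<open>Action on V(z,k) \<otimes> V(z',k') via the coproduct
  Delta(E) = E \<otimes> W^{-1} + 1 \<otimes> E, Delta(F) = F \<otimes> 1 + W \<otimes> F, Delta(W) = W \<otimes> W, Delta(K) = K \<otimes> K.\<close>
definition actT :: "complex \<Rightarrow> complex \<Rightarrow> complex \<Rightarrow> complex \<Rightarrow> complex \<Rightarrow> gen \<Rightarrow> complex^(bool\<times>bool)^(bool\<times>bool)" where
  "actT q z k z' k' g = (case g of
     GE \<Rightarrow> tensM False (actV q z k GE) (WinvV z') + tensM True (mat 1) (actV q z' k' GE)
   | GF \<Rightarrow> tensM False (actV q z k GF) (mat 1) + tensM True (actV q z k GW) (actV q z' k' GF)
   | GW \<Rightarrow> tensM False (actV q z k GW) (actV q z' k' GW)
   | GK \<Rightarrow> tensM False (actV q z k GK) (actV q z' k' GK))"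

definition is_hom :: "(gen \<Rightarrow> complex^'a^'a) \<Rightarrow> (gen \<Rightarrow> complex^'b^'b) \<Rightarrow> complex^'a^'b \<Rightarrow> bool" where
  "is_hom \<rho>1 \<rho>2 \<phi> \<longleftrightarrow> (\<forall>g. \<phi> ** \<rho>1 g = \<rho>2 g ** \<phi>)"

definition is_iso :: "(gen \<Rightarrow> complex^'a^'a) \<Rightarrow> (gen \<Rightarrow> complex^'a^'a) \<Rightarrow> complex^'a^'a \<Rightarrow> bool" where
  "is_iso \<rho>1 \<rho>2 \<phi> \<longleftrightarrow> is_hom \<rho>1 \<rho>2 \<phi> \<and> invertible \<phi>"

text \<open>Matrix of the map of form (*) from V(z,k) \<otimes> V(z',k') to V(z',k') \<otimes> V(z,k).
  Source index (i,j) = e_i \<otimes> e'_j; target index (j,i) = e'_j \<otimes> e_i.\<close>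
definition formMat :: "complex \<Rightarrow> complex \<Rightarrow> complex \<Rightarrow> complex \<Rightarrow> complex \<Rightarrow> complex \<Rightarrow> complex^(bool\<times>bool)^(bool\<times>bool)" where
  "formMat a1 a2 b1 b2 c1 c2 = (\<chi> r s.
     if s = (False, False) then (if r = (False, False) then a2 else 0)
     else if s = (False, True) then (if r = (False, True) then c2 else if r = (True, False) then b2 else 0)
     else if s = (True, False) then (if r = (False, True) then b1 else if r = (True, False) then c1 else 0)
     else (if r = (True, True) then a1 else 0))"

end

theory Submission imports Defs begin
lemma UNIV_bb: "(UNIV::(bool\<times>bool) set) = {(False,False),(False,True),(True,False),(True,True)}"
  by auto
lemma all_bb: "(\<forall>x::bool\<times>bool. P x) \<longleftrightarrow> P (False,False) \<and> P (False,True) \<and> P (True,False) \<and> P (True,True)"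
  by (metis (full_types) prod.exhaust)
lemma all_gen: "(\<forall>g. P g) \<longleftrightarrow> P GE \<and> P GF \<and> P GW \<and> P GK"
  by (metis gen.exhaust)
lemma part1:
  fixes q z k z' k' :: complex
  assumes "q \<noteq> 0" "q ^ 4 \<noteq> 1" "k \<noteq> 0" "k' \<noteq> 0"
    and h: "is_hom (actT q z k z' k') (actT q z' k' z k) \<phi>"
  shows "\<phi> = formMat (\<phi>$(True,True)$(True,True)) (\<phi>$(False,False)$(False,False))
     (\<phi>$(False,True)$(True,False)) (\<phi>$(True,False)$(False,True))
     (\<phi>$(True,False)$(True,False)) (\<phi>$(False,True)$(False,True))"
proof -
  have q2: "q^2 \<noteq> 1" using assms(2) by (metis power2_eq_1_iff power_minus_even power_one numeral_Bit0 power_add numeral_Bit0 power_mult power2_eq_square mult_1_left)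
  have q4: "q^4 \<noteq> 1" by fact
  have kk: "k * k' \<noteq> 0" using assms by simp
  have "\<phi> ** actT q z k z' k' GK = actT q z' k' z k GK ** \<phi>" using h unfolding is_hom_def by blast
  then have E: "\<forall>i j. (\<phi> ** actT q z k z' k' GK) $ i $ j = (actT q z' k' z k GK ** \<phi>) $ i $ j"
    by simp
  note E' = E[unfolded matrix_matrix_mult_def, simplified all_bb, simplified,
      simplified UNIV_bb actT_def actV_def tensM_def, simplified]
  show ?thesis
    unfolding vec_eq_iff all_bb formMat_def
    apply simp
    using E' q2 q4 kk assms(1)
    apply (auto simp: field_simps)
    done
qed
theorem proposition4p2:
  fixes q z k z' k' :: complex
  assumes "q \<noteq> 0" "q ^ 4 \<noteq> 1"
    and "z \<noteq> 0" "k \<noteq> 0" "z' \<noteq> 0" "k' \<noteq> 0"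
    and "z \<noteq> 1" "z \<noteq> -1" "k ^ 4 \<noteq> 1"
    and "z' \<noteq> 1" "z' \<noteq> -1" "k' ^ 4 \<noteq> 1"
  shows "(\<forall>\<phi>. is_iso (actT q z k z' k') (actT q z' k' z k) \<phi> \<longrightarrow>
            (\<exists>a1 a2 b1 b2 c1 c2. \<phi> = formMat a1 a2 b1 b2 c1 c2))
       \<and> (\<forall>a1 a2 b1 b2 c1 c2.
            is_hom (actT q z k z' k') (actT q z' k' z k) (formMat a1 a2 b1 b2 c1 c2) \<longleftrightarrow>
              (qbr q z * c2 + qbr q z' * inverse z * b2 = qbr q z' * a2
             \<and> qbr q z * b1 + inverse z * qbr q z' * c1 = qbr q z * inverse z' * a2
             \<and> qbr q z' * inverse z * a1 = inverse z' * qbr q z * c2 - qbr q z' * b1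
             \<and> - qbr q z * a1 = inverse z' * qbr q z * b2 - qbr q z' * c1
             \<and> a2 = c1 + z * b2
             \<and> z' * a2 = b1 + z * c2
             \<and> c2 - z' * b2 = a1
             \<and> b1 - c1 * z' = - a1 * z))"
  proof (intro conjI allI impI)
  fix \<phi> assume "is_iso (actT q z k z' k') (actT q z' k' z k) \<phi>"
  then have "is_hom (actT q z k z' k') (actT q z' k' z k) \<phi>" unfolding is_iso_def by blast
  from part1[OF assms(1,2,4,6) this] show "\<exists>a1 a2 b1 b2 c1 c2. \<phi> = formMat a1 a2 b1 b2 c1 c2" by blast
next
  fix a1 a2 b1 b2 c1 c2 :: complex
  show "is_hom (actT q z k z' k') (actT q z' k' z k) (formMat a1 a2 b1 b2 c1 c2) \<longleftrightarrow>
              (qbr q z * c2 + qbr q z' * inverse z * b2 = qbr q z' * a2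
             \<and> qbr q z * b1 + inverse z * qbr q z' * c1 = qbr q z * inverse z' * a2
             \<and> qbr q z' * inverse z * a1 = inverse z' * qbr q z * c2 - qbr q z' * b1
             \<and> - qbr q z * a1 = inverse z' * qbr q z * b2 - qbr q z' * c1
             \<and> a2 = c1 + z * b2
             \<and> z' * a2 = b1 + z * c2
             \<and> c2 - z' * b2 = a1
             \<and> b1 - c1 * z' = - a1 * z)"
    unfolding is_hom_def all_gen vec_eq_iff matrix_matrix_mult_def
    apply (simp only: all_bb)
    apply (simp add: UNIV_bb actT_def actV_def tensM_def formMat_def WinvV_def mat_def)
    apply (auto simp: algebra_simps)
    done
qed

end
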